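(* Let $R_e\approx1.4877$ be the unique positive root of $\frac{10}{7(R+1)}-\frac{R^2\sqrt{R}}{R^2+R+1}=0$. Let $\tau_k>0$ be time-step sizes with ratios $r_k=\tau_k/\tau_{k-1}$ satisfying $0<r_k<R_e$ for all $k\ge2$. Then for every $n\ge3$ and all real numbers $\xi_3,\dots,\xi_n$, $$2\sum_{k=3}^n\xi_k\sum_{j=3}^k\tau_kd^{(k)}_{k-j}\xi_j\ge\frac{1}{50}\sum_{k=3}^n\tau_k\xi_k^2 .$$
   Context: For $x,y\ge0$ let $d_0(x,y)=\frac{1+2x}{1+x}+\frac{xy}{1+y+xy}$, $d_1(x,y)=-\frac{x}{1+x}-\frac{xy}{1+y+xy}-\frac{xy^2}{1+y+xy}\frac{1+x}{1+y}$, $d_2(x,y)=\frac{xy^2}{1+y+xy}\frac{1+x}{1+y}$. The BDF3 kernels are $d^{(k)}_j=d_j(r_k,r_{k-1})$ for $j=0,1,2$ and $d^{(k)}_j=0$ for $j\ge3$. *)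

theory Defs
  imports Complex_Main
begin

definition d0 :: "real \<Rightarrow> real \<Rightarrow> real" where
  "d0 x y = (1 + 2*x) / (1 + x) + x*y / (1 + y + x*y)"

definition d1 :: "real \<Rightarrow> real \<Rightarrow> real" where
  "d1 x y = - x / (1 + x) - x*y / (1 + y + x*y) - (x*y^2 / (1 + y + x*y)) * ((1 + x) / (1 + y))"

definition d2 :: "real \<Rightarrow> real \<Rightarrow> real" where
  "d2 x y = (x*y^2 / (1 + y + x*y)) * ((1 + x) / (1 + y))"

definition ratio :: "(nat \<Rightarrow> real) \<Rightarrow> nat \<Rightarrow> real" where
  "ratio \<tau> k = \<tau> k / \<tau> (k - 1)"

definition bdf3_kernel :: "(nat \<Rightarrow> real) \<Rightarrow> nat \<Rightarrow> nat \<Rightarrow> real" where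
  "bdf3_kernel \<tau> k j =
     (if j = 0 then d0 (ratio \<tau> k) (ratio \<tau> (k - 1))
      else if j = 1 then d1 (ratio \<tau> k) (ratio \<tau> (k - 1))
      else if j = 2 then d2 (ratio \<tau> k) (ratio \<tau> (k - 1))
      else 0)"

definition R_e :: real where
  "R_e = (THE R. R > 0 \<and> 10 / (7 * (R + 1)) - R^2 * sqrt R / (R^2 + R + 1) = 0)"

end

theory Submission
  imports Defs
begin


definition a1 :: "real \<Rightarrow> real \<Rightarrow> real" where
 "a1 x y = 11/75 + 11/75*y + 161/75*x + 322/75*x*y + 311/75*x^2*y"
definition b1 :: "real \<Rightarrow> real \<Rightarrow> real" where
 "b1 x y = 7/12 + 7/6*y + 7/12*y^2 - 5/12*x - 5/4*x*y - 11/6*x*y^2 - 17/12*x^2*y - 41/12*x^2*y^2 - x^3*y^2"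
definition KK :: "real \<Rightarrow> real \<Rightarrow> real" where
 "KK x y = (1+x)*(1+y)*(1+y+x*y)"
definition t1 :: "real \<Rightarrow> real \<Rightarrow> real" where
 "t1 x y = 5/7*KK x y*(1+y)*a1 x y - x^3*y^5*(1+x)^4"
definition t2 :: "real \<Rightarrow> real" where
 "t2 y = 235/294 - 49/144*y"
definition t3 :: "real \<Rightarrow> real \<Rightarrow> real" where
 "t3 x y = 5/7*b1 x y + 7/12*x*y^3*(1+x)^2"

lemma bern_pos:
  fixes x y :: real
  assumes "0 \<le> x" "x \<le> 3/2" "0 \<le> y" "y \<le> 3/2"
  shows "0 \<le> t1 x y * t2 y - x * (t3 x y)^2"
proof -
  have eq: "t1 x y * t2 y - x * (t3 x y)^2 = (1058816/1640558367)*x^0*(3/2-x)^7*y^0*(3/2-y)^5 + (54854272/8202791835)*x^0*(3/2-x)^7*y^1*(3/2-y)^4 + (14510848/546852789)*x^0*(3/2-x)^7*y^2*(3/2-y)^3 + (80527040/1640558367)*x^0*(3/2-x)^7*y^3*(3/2-y)^2 + (65278400/1640558367)*x^0*(3/2-x)^7*y^4*(3/2-y)^1 + (1661000/182284263)*x^0*(3/2-x)^7*y^5*(3/2-y)^0 + (28952960/1640558367)*x^1*(3/2-x)^6*y^0*(3/2-y)^5 + (335142656/1640558367)*x^1*(3/2-x)^6*y^1*(3/2-y)^4 + (2437004608/2734263945)*x^1*(3/2-x)^6*y^2*(3/2-y)^3 + (2922571136/1640558367)*x^1*(3/2-x)^6*y^3*(3/2-y)^2 + (355442120/234365481)*x^1*(3/2-x)^6*y^4*(3/2-y)^1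 + (179004400/546852789)*x^1*(3/2-x)^6*y^5*(3/2-y)^0 + (64469120/546852789)*x^2*(3/2-x)^5*y^0*(3/2-y)^5 + (813056864/546852789)*x^2*(3/2-x)^5*y^1*(3/2-y)^4 + (6377238944/911421315)*x^2*(3/2-x)^5*y^2*(3/2-y)^3 + (40953532024/2734263945)*x^2*(3/2-x)^5*y^3*(3/2-y)^2 + (1062003272/78121827)*x^2*(3/2-x)^5*y^4*(3/2-y)^1 + (190615120/60761421)*x^2*(3/2-x)^5*y^5*(3/2-y)^0 + (566020960/1640558367)*x^3*(3/2-x)^4*y^0*(3/2-y)^5 + (7783755136/1640558367)*x^3*(3/2-x)^4*y^1*(3/2-y)^4 + (65644612888/2734263945)*x^3*(3/2-x)^4*y^2*(3/2-y)^3 + (448030660496/8202791835)*x^3*(3/2-x)^4*y^3*(3/2-y)^2 + (85519136056/1640558367)*x^3*(3/2-x)^4*y^4*(3/2-y)^1 + (326613800/26040609)*x^3*(3/2-x)^4*y^5*(3/2-y)^0 + (872010880/1640558367)*x^4*(3/2-x)^3*y^0*(3/2-y)^5 + (13004353840/1640558367)*x^4*(3/2-x)^3*y^1*(3/2-y)^4 + (117005149952/2734263945)*x^4*(3/2-x)^3*y^2*(3/2-y)^3 + (837271913306/8202791835)*x^4*(3/2-x)^3*y^3*(3/2-y)^2 + (164338322356/1640558367)*x^4*(3/2-x)^3*y^4*(3/2-y)^1 + (26745021655/1093705578)*x^4*(3/2-x)^3*y^5*(3/2-y)^0 + (247307072/546852789)*x^5*(3/2-x)^2*y^0*(3/2-y)^5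 + (19842474544/2734263945)*x^5*(3/2-x)^2*y^1*(3/2-y)^4 + (37637243006/911421315)*x^5*(3/2-x)^2*y^2*(3/2-y)^3 + (275765772304/2734263945)*x^5*(3/2-x)^2*y^3*(3/2-y)^2 + (106718587963/1093705578)*x^5*(3/2-x)^2*y^4*(3/2-y)^1 + (1430713070/60761421)*x^5*(3/2-x)^2*y^5*(3/2-y)^0 + (331162880/1640558367)*x^6*(3/2-x)^1*y^0*(3/2-y)^5 + (5671135472/1640558367)*x^6*(3/2-x)^1*y^1*(3/2-y)^4 + (11168404708/546852789)*x^6*(3/2-x)^1*y^2*(3/2-y)^3 + (80388765542/1640558367)*x^6*(3/2-x)^1*y^3*(3/2-y)^2 + (138183957745/3281116734)*x^6*(3/2-x)^1*y^4*(3/2-y)^1 + (2318964275/243045684)*x^6*(3/2-x)^1*y^5*(3/2-y)^0 + (60744800/1640558367)*x^7*(3/2-x)^0*y^0*(3/2-y)^5 + (1101248240/1640558367)*x^7*(3/2-x)^0*y^1*(3/2-y)^4 + (2211619610/546852789)*x^7*(3/2-x)^0*y^2*(3/2-y)^3 + (14507627840/1640558367)*x^7*(3/2-x)^0*y^3*(3/2-y)^2 + (7154522450/1640558367)*x^7*(3/2-x)^0*y^4*(3/2-y)^1 + (130847875/312487308)*x^7*(3/2-x)^0*y^5*(3/2-y)^0"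
    unfolding t1_def t2_def t3_def a1_def b1_def KK_def by algebra
  have h1: "0 \<le> 3/2 - x" "0 \<le> 3/2 - y" using assms by auto
  show ?thesis unfolding eq
    by (intro add_nonneg_nonneg mult_nonneg_nonneg zero_le_power h1 assms) auto
qed

lemma psd2:
  fixes a b c u v :: real
  assumes "c > 0" "b^2 \<le> a*c"
  shows "0 \<le> a*u^2 + 2*b*u*v + c*v^2"
proof -
  have "c*(a*u^2 + 2*b*u*v + c*v^2) = (c*v + b*u)^2 + (a*c - b^2)*u^2"
    by algebra
  also have "\<dots> \<ge> 0" using assms by (intro add_nonneg_nonneg) auto
  finally show ?thesis using assms(1) by (simp add: zero_le_mult_iff)
qed

lemma psd3:
  fixes a b d e f c u v w :: real
  assumes "c > 0" "e*c - f^2 > 0" "(b*c - d*f)^2 \<le> (a*c - d^2)*(e*c - f^2)"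
  shows "0 \<le> a*u^2 + 2*b*u*v + 2*d*u*w + e*v^2 + 2*f*v*w + c*w^2"
proof -
  have "c*(a*u^2 + 2*b*u*v + 2*d*u*w + e*v^2 + 2*f*v*w + c*w^2) =
     (c*w + d*u + f*v)^2 + ((a*c - d^2)*u^2 + 2*(b*c - d*f)*u*v + (e*c - f^2)*v^2)"
    by algebra
  also have "\<dots> \<ge> 0"
  proof -
    have "0 \<le> (a*c - d^2)*u^2 + 2*(b*c - d*f)*u*v + (e*c - f^2)*v^2"
      using psd2[OF assms(2), of "b*c - d*f" "a*c - d^2" u v] assms(3)
      by (simp add: mult.commute)
    then show ?thesis using zero_le_power2[of "c*w + d*u + f*v"] by linarith
  qed
  finally show ?thesis using assms(1) by (simp add: zero_le_mult_iff)
qed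


lemma frac_d0:
  fixes A B p q :: real assumes "A \<noteq> 0" "B \<noteq> 0"
  shows "A*B*(p/A + q/B) = p*B + q*A"
  using assms by (simp add: field_simps)

lemma frac_d2:
  fixes A B p q :: real assumes "A \<noteq> 0" "B \<noteq> 0"
  shows "B*A*((p/B)*(q/A)) = p*q"
  using assms by (simp add: field_simps)

lemma frac_d1:
  fixes A B C p q r :: real assumes "A \<noteq> 0" "B \<noteq> 0"
  shows "A*C*B*(- p/A - q/B - r) = - p*C*B - q*A*C - A*C*B*r"
  using assms by (simp add: field_simps)

lemma coefs:
  fixes x y :: real assumes "0 < x" "0 < y"
  shows "(1+x)*(1+y+x*y)*(2*d0 x y - 1/50 - 11/6) = a1 x y"
    and "(1+x)*(1+y)*(1+y+x*y)*(d1 x y + 7/12) = b1 x y"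
    and "y*(1+x)*(1+y)*(1+y+x*y)*d2 x y = x*y^3*(1+x)^2"
proof -
  have nz: "1+x \<noteq> 0" "1+y+x*y \<noteq> 0" "1+y \<noteq> 0" using assms
    by (smt (verit) mult_pos_pos)+
  have e0: "(1+x)*(1+y+x*y)*d0 x y = (1+2*x)*(1+y+x*y) + x*y*(1+x)"
    unfolding d0_def by (rule frac_d0[OF nz(1,2)])
  have e2: "(1+y+x*y)*(1+y)*d2 x y = x*y^2*(1+x)"
    unfolding d2_def by (rule frac_d2[OF nz(3,2)])
  have e1: "(1+x)*(1+y)*(1+y+x*y)*d1 x y = - x*(1+y)*(1+y+x*y) - x*y*(1+x)*(1+y) - (1+x)*((1+y+x*y)*(1+y)*d2 x y)"
  proof -
    have "d1 x y = - x/(1+x) - x*y/(1+y+x*y) - d2 x y"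
      unfolding d1_def d2_def by simp
    then have "(1+x)*(1+y)*(1+y+x*y)*d1 x y = - x*(1+y)*(1+y+x*y) - x*y*(1+x)*(1+y) - (1+x)*(1+y)*(1+y+x*y)*d2 x y"
      using frac_d1[OF nz(1,2), of "1+y" x "x*y" "d2 x y"] by simp
    then show ?thesis by (simp add: algebra_simps)
  qed
  show "(1+x)*(1+y+x*y)*(2*d0 x y - 1/50 - 11/6) = a1 x y"
  proof -
    have "(1+x)*(1+y+x*y)*(2*d0 x y - 1/50 - 11/6) = 2*((1+x)*(1+y+x*y)*d0 x y) - (1/50 + 11/6)*((1+x)*(1+y+x*y))"
      by algebra
    also have "\<dots> = a1 x y" unfolding e0 a1_def by algebra
    finally show ?thesis .
  qed
  show "(1+x)*(1+y)*(1+y+x*y)*(d1 x y + 7/12) = b1 x y"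
  proof -
    have "(1+x)*(1+y)*(1+y+x*y)*(d1 x y + 7/12) = (1+x)*(1+y)*(1+y+x*y)*d1 x y + 7/12*((1+x)*(1+y)*(1+y+x*y))"
      by algebra
    also have "\<dots> = b1 x y" unfolding e1 e2 b1_def by algebra
    finally show ?thesis .
  qed
  show "y*(1+x)*(1+y)*(1+y+x*y)*d2 x y = x*y^3*(1+x)^2"
  proof -
    have "y*(1+x)*(1+y)*(1+y+x*y)*d2 x y = y*(1+x)*((1+y+x*y)*(1+y)*d2 x y)" by algebra
    also have "\<dots> = x*y^3*(1+x)^2" unfolding e2 by algebra
    finally show ?thesis .
  qed
qed

lemma local_ineq:
  fixes x y u v w :: real
  assumes x: "0 < x" "x \<le> 3/2" and y: "0 < y" "y \<le> 3/2"
  shows "0 \<le> x*(2*d0 x y - 1/50 - 11/6)*u^2 + 2*x*(d1 x y + 7/12)*u*v + 2*x*d2 x y*u*w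
              + (47/42)*v^2 + 2*(-7/12)*v*w + (5/7/y)*w^2"
    (is "0 \<le> ?Phi")
proof -
  define D where "D = 1+y+x*y"
  define L where "L = y*KK x y"
  have Dpos: "D > 0" unfolding D_def using x y by (smt (verit) mult_pos_pos)
  have Kpos: "KK x y > 0" unfolding KK_def using x y Dpos D_def by (simp add: add_pos_pos)
  have Lpos: "L > 0" unfolding L_def using y Kpos by simp
  have c1: "L*(x*(2*d0 x y - 1/50 - 11/6)) = x*y*(1+y)*a1 x y"
  proof -
    have "L*(x*(2*d0 x y - 1/50 - 11/6)) = x*y*(1+y)*((1+x)*(1+y+x*y)*(2*d0 x y - 1/50 - 11/6))"
      unfolding L_def KK_def by algebra
    then show ?thesis by (simp only: coefs(1)[OF x(1) y(1)])
  qed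
  have c2: "L*(x*(d1 x y + 7/12)) = x*y*b1 x y"
  proof -
    have "L*(x*(d1 x y + 7/12)) = x*y*((1+x)*(1+y)*(1+y+x*y)*(d1 x y + 7/12))"
      unfolding L_def KK_def by algebra
    then show ?thesis by (simp only: coefs(2)[OF x(1) y(1)])
  qed
  have c3: "L*(x*d2 x y) = x^2*y^3*(1+x)^2"
  proof -
    have "L*(x*d2 x y) = x*(y*(1+x)*(1+y)*(1+y+x*y)*d2 x y)"
      unfolding L_def KK_def by algebra
    also have "\<dots> = x*(x*y^3*(1+x)^2)" by (simp only: coefs(3)[OF x(1) y(1)])
    finally show ?thesis by algebra
  qed
  have c6: "L*(5/7/y) = 5/7*KK x y" unfolding L_def using y by simp
  have eqL: "L*?Phi = (L*(x*(2*d0 x y - 1/50 - 11/6)))*u^2 + 2*(L*(x*(d1 x y + 7/12)))*u*v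
       + 2*(L*(x*d2 x y))*u*w + (y*KK x y*(47/42))*v^2 + 2*(-7/12*y*KK x y)*v*w + (L*(5/7/y))*w^2"
    unfolding L_def by (simp add: algebra_simps)
  let ?a = "x*y*(1+y)*a1 x y" and ?b = "x*y*b1 x y" and ?d = "x^2*y^3*(1+x)^2"
  let ?e = "y*KK x y*(47/42)" and ?f = "-7/12*y*KK x y" and ?c = "5/7*KK x y"
  have i1: "?a*?c - ?d^2 = x*y*t1 x y" unfolding t1_def by algebra
  have i2: "?b*?c - ?d*?f = x*y*KK x y*t3 x y" unfolding t3_def by algebra
  have i3: "?e*?c - ?f^2 = y*(KK x y)^2*t2 y" unfolding t2_def by algebra
  have t2pos: "t2 y > 0" unfolding t2_def using y by simp
  have P: "0 \<le> t1 x y * t2 y - x * (t3 x y)^2" using bern_pos[of x y] x y by simp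
  have "0 \<le> ?a*u^2 + 2*?b*u*v + 2*?d*u*w + ?e*v^2 + 2*?f*v*w + ?c*w^2"
  proof (rule psd3)
    show "?c > 0" using Kpos by simp
    show "?e*?c - ?f^2 > 0" unfolding i3 using y Kpos t2pos by simp
    have "(x*y*t1 x y)*(y*(KK x y)^2*t2 y) - (x*y*KK x y*t3 x y)^2
          = x*y^2*(KK x y)^2*(t1 x y * t2 y - x * (t3 x y)^2)" by algebra
    also have "\<dots> \<ge> 0" using P x y by simp
    finally show "(?b*?c - ?d*?f)^2 \<le> (?a*?c - ?d^2)*(?e*?c - ?f^2)"
      unfolding i1 i2 i3 by simp
  qed
  also have "\<dots> = L*?Phi" unfolding eqL c1 c2 c3 c6 by (simp add: algebra_simps)
  finally show ?thesis using Lpos by (simp add: zero_le_mult_iff)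
qed



lemma Re_lt: "R_e < 3/2"
proof -
  define f where "f R = 10/(7*(R+1)) - R^2*sqrt R/(R^2+R+1)" for R :: real
  have mono: "f b < f a" if ab: "0 < a" "a < b" for a b
  proof -
    have A: "10/(7*(b+1)) < 10/(7*(a+1))" using ab by (simp add: field_simps)
    have den: "a^2+a+1 > 0" "b^2+b+1 > 0" using ab by (simp_all add: add_pos_pos)
    have "a^2*(b^2+b+1) < b^2*(a^2+a+1)"
    proof -
      have "b^2*(a^2+a+1) - a^2*(b^2+b+1) = (b-a)*(a*b+a+b)" by algebra
      moreover have "(b-a)*(a*b+a+b) > 0" using ab by (simp add: add_pos_pos)
      ultimately show ?thesis by linarith
    qed
    then have B: "a^2/(a^2+a+1) < b^2/(b^2+b+1)" using den by (simp add: divide_simps)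
    have C: "sqrt a < sqrt b" using ab by simp
    have "a^2/(a^2+a+1) * sqrt a < b^2/(b^2+b+1) * sqrt b"
      using B C ab den by (intro mult_strict_mono) auto
    then have "a^2*sqrt a/(a^2+a+1) < b^2*sqrt b/(b^2+b+1)" by (simp add: field_simps)
    with A show ?thesis unfolding f_def by linarith
  qed
  have nz: "x^2 + x + 1 \<noteq> 0" if "1 \<le> x" for x :: real
  proof -
    have "x^2 + x + 1 > 0" using that by (simp add: add_pos_pos add_nonneg_pos)
    then show ?thesis by simp
  qed
  have cont: "continuous_on {1..3/2} f"
    unfolding f_def by (intro continuous_intros) (auto dest: nz)
  have f1: "f 1 > 0" unfolding f_def by simp
  have s: "121/100 < sqrt (3/2::real)" by (rule real_less_rsqrt) (simp add: power2_eq_square)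
  have f32: "f (3/2) < 0"
  proof -
    have "f (3/2) = 4/7 - 9/19 * sqrt (3/2)" unfolding f_def by (simp add: power2_eq_square)
    then show ?thesis using s by simp
  qed
  obtain r where r: "1 \<le> r" "r \<le> 3/2" "f r = 0"
    using IVT2'[of f "3/2" 0 1] f1 f32 cont by force
  have r32: "r < 3/2" using r f32 by (cases "r = 3/2") auto
  have "R_e = r"
    unfolding R_e_def
  proof (rule the_equality)
    show "r > 0 \<and> 10 / (7 * (r + 1)) - r^2 * sqrt r / (r^2 + r + 1) = 0"
      using r f_def by auto
  next
    fix R assume R: "R > 0 \<and> 10 / (7 * (R + 1)) - R^2 * sqrt R / (R^2 + R + 1) = 0"
    then have fR: "f R = 0" "R > 0" unfolding f_def by auto
    show "R = r"
    proof (rule ccontr)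
      assume "R \<noteq> r"
      then have "R < r \<or> r < R" by linarith
      then show False using mono[of R r] mono[of r R] fR r by auto
    qed
  qed
  then show ?thesis using r32 by simp
qed

lemma inner_sum:
  fixes \<tau> \<xi> :: "nat \<Rightarrow> real"
  assumes k: "k \<ge> 3"
  shows "(\<Sum>j = 3..k. \<tau> k * bdf3_kernel \<tau> k (k - j) * \<xi> j)
    = \<tau> k * (d0 (ratio \<tau> k) (ratio \<tau> (k - 1)) * \<xi> k
        + d1 (ratio \<tau> k) (ratio \<tau> (k - 1)) * (if 3 \<le> k - 1 then \<xi> (k - 1) else 0)
        + d2 (ratio \<tau> k) (ratio \<tau> (k - 1)) * (if 3 \<le> k - 2 then \<xi> (k - 2) else 0))"
proof -
  have "k = 3 \<or> k = 4 \<or> k = (k-5)+5" using k by linarith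
  then consider "k = 3" | "k = 4" | m where "k = m + 5" by blast
  then show ?thesis
  proof cases
    case 1 then show ?thesis by (simp add: bdf3_kernel_def algebra_simps)
  next
    case 2 then show ?thesis by (simp add: bdf3_kernel_def algebra_simps numeral_eq_Suc)
  next
    case 3
    have z: "(\<Sum>j = 3..m+2. \<tau> k * bdf3_kernel \<tau> k (k - j) * \<xi> j) = 0"
      by (rule sum.neutral) (auto simp: bdf3_kernel_def 3)
    have "(\<Sum>j = 3..k. \<tau> k * bdf3_kernel \<tau> k (k - j) * \<xi> j)
       = (\<Sum>j = 3..m+2. \<tau> k * bdf3_kernel \<tau> k (k - j) * \<xi> j)
         + \<tau> k * bdf3_kernel \<tau> k 2 * \<xi> (m+3) + \<tau> k * bdf3_kernel \<tau> k 1 * \<xi> (m+4)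
         + \<tau> k * bdf3_kernel \<tau> k 0 * \<xi> (m+5)"
      unfolding 3 by (simp add: numeral_eq_Suc)
    then show ?thesis unfolding z by (simp add: bdf3_kernel_def 3 algebra_simps numeral_eq_Suc)
  qed
qed


theorem lemma3p2:
  fixes \<tau> \<xi> :: "nat \<Rightarrow> real" and n :: nat
  assumes tau_pos: "\<And>k. k \<ge> 1 \<Longrightarrow> \<tau> k > 0"
    and ratio_bound: "\<And>k. k \<ge> 2 \<Longrightarrow> 0 < ratio \<tau> k \<and> ratio \<tau> k < R_e"
    and n: "n \<ge> 3"
  shows "2 * (\<Sum>k = 3..n. \<xi> k * (\<Sum>j = 3..k. \<tau> k * bdf3_kernel \<tau> k (k - j) * \<xi> j))
           \<ge> (1/50) * (\<Sum>k = 3..n. \<tau> k * (\<xi> k)^2)"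
proof -
  define r where "r k = ratio \<tau> k" for k
  define xe where "xe j = (if 3 \<le> j then \<xi> j else 0)" for j
  define T where "T k = 2*(\<xi> k*(\<tau> k*(d0 (r k) (r (k-1))*\<xi> k + d1 (r k) (r (k-1))*xe (k-1)
       + d2 (r k) (r (k-1))*xe (k-2)))) - 1/50*(\<tau> k*(\<xi> k)^2)" for k
  define G where "G k = \<tau> k*(11/6)*(\<xi> k)^2 + 2*(\<tau> k*(-7/12))*\<xi> k*xe (k-1) + \<tau> (k-1)*(5/7)*(xe (k-1))^2" for k
  have rb: "0 < r k" "r k \<le> 3/2" if "k \<ge> 2" for k
    using ratio_bound[OF that] Re_lt unfolding r_def by auto
  have tr: "\<tau> k = r k * \<tau> (k-1)" if "k \<ge> 2" for k
  proof -
    have "\<tau> (k-1) > 0" using tau_pos that by simp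
    then show ?thesis unfolding r_def ratio_def by simp
  qed
  have claim: "G m \<le> (\<Sum>k = 3..m. T k)" if "m \<ge> 3" for m
    using that
  proof (induction m rule: nat_induct_at_least)
    case base
    have x: "0 < r 3" "r 3 \<le> 3/2" and y: "0 < r 2" "r 2 \<le> 3/2" using rb by auto
    have L: "0 \<le> r 3*(2*d0 (r 3) (r 2) - 1/50 - 11/6)*(\<xi> 3)^2"
      using local_ineq[OF x y, of "\<xi> 3" 0 0] by simp
    have "\<tau> 2 > 0" using tau_pos by simp
    then have "0 \<le> \<tau> 2 * (r 3*(2*d0 (r 3) (r 2) - 1/50 - 11/6)*(\<xi> 3)^2)"
      using L by simp
    moreover have "\<tau> 3 = r 3 * \<tau> 2" using tr[of 3] by simp
    ultimately have "0 \<le> \<tau> 3*(2*d0 (r 3) (r 2) - 1/50 - 11/6)*(\<xi> 3)^2"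
      by (simp add: algebra_simps)
    then show ?case unfolding G_def T_def xe_def by (simp add: algebra_simps power2_eq_square)
  next
    case (Suc m)
    have m: "m \<ge> 3" by fact
    define x where "x = r (Suc m)"
    define y where "y = r m"
    have x: "0 < x" "x \<le> 3/2" unfolding x_def using rb m by auto
    have y: "0 < y" "y \<le> 3/2" unfolding y_def using rb m by auto
    have tm: "\<tau> m > 0" using tau_pos m by simp
    have h1: "\<tau> (Suc m) = x * \<tau> m" unfolding x_def using tr[of "Suc m"] m by simp
    have h2: "\<tau> (m - 1) = \<tau> m / y" unfolding y_def using tr[of m] m y y_def by (simp add: field_simps)
    have xm: "xe m = \<xi> m" unfolding xe_def using m by simp
    let ?u = "\<xi> (Suc m)" and ?v = "\<xi> m" and ?w = "xe (m-1)"
    have loc: "0 \<le> \<tau> m * (x*(2*d0 x y - 1/50 - 11/6)*?u^2 + 2*x*(d1 x y + 7/12)*?u*?v + 2*x*d2 x y*?u*?w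
              + (47/42)*?v^2 + 2*(-7/12)*?v*?w + (5/7/y)*?w^2)"
      using local_ineq[OF x y, of ?u ?v ?w] tm by simp
    have eq: "G m + T (Suc m) - G (Suc m) = \<tau> m * (x*(2*d0 x y - 1/50 - 11/6)*?u^2 + 2*x*(d1 x y + 7/12)*?u*?v + 2*x*d2 x y*?u*?w
              + (47/42)*?v^2 + 2*(-7/12)*?v*?w + (5/7/y)*?w^2)"
    proof -
      have xs: "xe (Suc m - 2) = xe (m - 1)" by (simp add: numeral_eq_Suc)
      have h2': "\<tau> (m - Suc 0) = \<tau> m / y" using h2 by simp
      show ?thesis unfolding G_def T_def xs
        using y by (simp add: xm h1 h2' x_def[symmetric] y_def[symmetric] field_simps power2_eq_square)
    qed
    have "(\<Sum>k = 3..Suc m. T k) = (\<Sum>k = 3..m. T k) + T (Suc m)" using m by simp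
    then show ?case using Suc.IH loc eq by linarith
  qed
  have Gpos: "0 \<le> G n"
  proof -
    have t1: "\<tau> n > 0" "\<tau> (n-1) > 0" using tau_pos n by auto
    have "\<tau> n \<le> 3/2 * \<tau> (n-1)" using tr[of n] rb[of n] n t1 by (simp add: mult_right_mono)
    then have "(\<tau> n*(-7/12))^2 \<le> (\<tau> n*(11/6)) * (\<tau> (n-1)*(5/7))"
      using t1 by (simp add: power2_eq_square field_simps)
    then show ?thesis unfolding G_def using psd2[of "\<tau> (n-1)*(5/7)" "\<tau> n*(-7/12)" "\<tau> n*(11/6)" "\<xi> n" "xe (n-1)"] t1
      by (simp add: algebra_simps)
  qed
  have lhs: "2 * (\<Sum>k = 3..n. \<xi> k * (\<Sum>j = 3..k. \<tau> k * bdf3_kernel \<tau> k (k - j) * \<xi> j))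
      - (1/50) * (\<Sum>k = 3..n. \<tau> k * (\<xi> k)^2) = (\<Sum>k = 3..n. T k)"
  proof -
    have "(\<Sum>k = 3..n. T k) = (\<Sum>k = 3..n. 2*(\<xi> k * (\<Sum>j = 3..k. \<tau> k * bdf3_kernel \<tau> k (k - j) * \<xi> j)) - 1/50*(\<tau> k*(\<xi> k)^2))"
    proof (rule sum.cong[OF refl])
      fix k assume "k \<in> {3..n}"
      then have k: "k \<ge> 3" by simp
      show "T k = 2*(\<xi> k * (\<Sum>j = 3..k. \<tau> k * bdf3_kernel \<tau> k (k - j) * \<xi> j)) - 1/50*(\<tau> k*(\<xi> k)^2)"
        unfolding inner_sum[OF k] T_def r_def xe_def by simp
    qed
    also have "\<dots> = 2 * (\<Sum>k = 3..n. \<xi> k * (\<Sum>j = 3..k. \<tau> k * bdf3_kernel \<tau> k (k - j) * \<xi> j))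
      - (1/50) * (\<Sum>k = 3..n. \<tau> k * (\<xi> k)^2)"
      by (simp add: sum_subtractf sum_distrib_left)
    finally show ?thesis by simp
  qed
  show ?thesis using lhs claim[OF n] Gpos by linarith
qed

end
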